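(* Let $n\ge 2$ and let $\sigma=(a_1,\dots,a_m)$ be a data stream with $a_k\in[n]=\{1,\dots,n\}$, with frequency vector $\mathbf{f}=(f_1,\dots,f_n)$, where $f_i$ is the number of $k$ with $a_k=i$. Write $\mathbf{F}_k=\sum_{i=1}^n f_i^k$ for $k\ge 1$, and let $\mathbf{F}_0=n$ denote the number of distinct elements of the stream (every element of $[n]$ occurs in the stream). Let $h:[n]\to\{-1,+1\}$ be a random hash function drawn from a $4$-universal family, and let $X=\left(\sum_{j=1}^n f_j h(j)\right)^2$ be the AMS (Tug-of-war) estimate of $\mathbf{F}_2$; it satisfies $\mathbb{E}[X]=\mathbf{F}_2$ and $\mathrm{Var}(X)=2(\mathbf{F}_2^2-\mathbf{F}_4)$. Then there exist a random variable $Z$ (defined on the same probability space) and a constant $\hat{c}\in\mathbb{R}$ such that $$\mathrm{Var}\big(X+\hat{c}(Z-\mathbb{E}[Z])\big)=\mathrm{Var}(X)-\frac{(\mathbf{F}_1^2-\mathbf{F}_2)^2}{\mathbf{F}_0(\mathbf{F}_0-1)}.$$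
   Context: A random function $h:[n]\to\{-1,+1\}$ is drawn from a $4$-universal family if for all pairwise distinct $i_1,\dots,i_4\in[n]$ and all $z_1,\dots,z_4\in\{-1,+1\}$, $\Pr[h(i_1)=z_1,\dots,h(i_4)=z_4]=1/2^4$ (in particular the values $h(1),\dots,h(n)$ are $4$-wise independent uniform signs). The quantity $X+\hat c(Z-\mathbb{E}[Z])$ is called a control-variate estimator, with control variate $Z$ and coefficient $\hat c$. *)

theory Defs
  imports "HOL-Probability.Probability"
begin

definition freq :: "nat list \<Rightarrow> nat \<Rightarrow> nat" where
  "freq as i = length (filter (\<lambda>a. a = i) as)"

definition Fmom :: "nat \<Rightarrow> nat list \<Rightarrow> nat \<Rightarrow> real" where
  "Fmom n as k = (\<Sum>i=1..n. real (freq as i) ^ k)"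

definition four_universal :: "'w measure \<Rightarrow> ('w \<Rightarrow> nat \<Rightarrow> real) \<Rightarrow> nat \<Rightarrow> bool" where
  "four_universal M h n \<longleftrightarrow>
     (\<forall>i\<in>{1..n}. (\<lambda>\<omega>. h \<omega> i) \<in> borel_measurable M) \<and>
     (\<forall>\<omega>\<in>space M. \<forall>i\<in>{1..n}. h \<omega> i \<in> {-1, 1}) \<and>
     (\<forall>S z. S \<subseteq> {1..n} \<longrightarrow> card S \<le> 4 \<longrightarrow> (\<forall>i\<in>S. z i \<in> {-1, 1::real}) \<longrightarrow>
        prob_space.prob M {\<omega>\<in>space M. \<forall>i\<in>S. h \<omega> i = z i} = 1 / 2 ^ card S)"

end

theory Submission imports Defs begin

lemma odd_empty:
  "({i\<in>{a,b,c,d}. odd (count (mset [a,b,c,d]) i)} = {}) \<longleftrightarrow>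
   (a = b \<and> c = d \<or> a = c \<and> b = d \<or> a = d \<and> b = (c::nat))"
  by (cases "a=b"; cases "a=c"; cases "a=d"; cases "b=c"; cases "b=d"; cases "c=d"; auto)

locale fu = prob_space M for M :: "'w measure" +
  fixes h :: "'w \<Rightarrow> nat \<Rightarrow> real" and n :: nat
  assumes U: "four_universal M h n"
begin

lemma hm: "i \<in> {1..n} \<Longrightarrow> (\<lambda>\<omega>. h \<omega> i) \<in> borel_measurable M"
  using U unfolding four_universal_def by blast

lemma hv: "\<omega> \<in> space M \<Longrightarrow> i \<in> {1..n} \<Longrightarrow> h \<omega> i \<in> {-1,1}"
  using U unfolding four_universal_def by blast

lemma hp: "S \<subseteq> {1..n} \<Longrightarrow> card S \<le> 4 \<Longrightarrow> (\<forall>i\<in>S. z i \<in> {-1, 1::real}) \<Longrightarrow>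
   prob {\<omega>\<in>space M. \<forall>i\<in>S. h \<omega> i = z i} = 1 / 2 ^ card S"
  using U unfolding four_universal_def by blast

lemma hsq: "\<omega> \<in> space M \<Longrightarrow> i \<in> {1..n} \<Longrightarrow> h \<omega> i * h \<omega> i = 1"
  using hv by fastforce

lemma set_meas: "finite S \<Longrightarrow> S \<subseteq> {1..n} \<Longrightarrow> {\<omega>\<in>space M. \<forall>i\<in>S. h \<omega> i = z i} \<in> sets M"
proof (rule sets.sets_Collect_finite_All)
  fix i assume "i \<in> S" "S \<subseteq> {1..n}"
  then have "(\<lambda>\<omega>. h \<omega> i) -` {z i} \<inter> space M \<in> sets M"
    using hm by (intro measurable_sets[OF hm]) auto
  moreover have "(\<lambda>\<omega>. h \<omega> i) -` {z i} \<inter> space M = {\<omega>\<in>space M. h \<omega> i = z i}" by auto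
  ultimately show "{\<omega>\<in>space M. h \<omega> i = z i} \<in> sets M" by simp
qed

lemma prodE:
  assumes S: "S \<subseteq> {1..n}" "card S \<le> 4"
  shows "expectation (\<lambda>\<omega>. \<Prod>i\<in>S. h \<omega> i) = (if S = {} then 1 else 0)"
proof -
  have fin: "finite S" using S finite_subset by blast
  let ?P = "PiE S (\<lambda>_. {-1, 1::real})"
  let ?A = "\<lambda>z. {\<omega>\<in>space M. \<forall>i\<in>S. h \<omega> i = z i}"
  have pw: "(\<Prod>i\<in>S. h \<omega> i) = (\<Sum>z\<in>?P. (\<Prod>i\<in>S. z i) * indicator (?A z) \<omega>)"
    if w: "\<omega> \<in> space M" for \<omega>
  proof -
    have "(\<Sum>z\<in>?P. (\<Prod>i\<in>S. z i) * indicator (?A z) \<omega>)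
       = (\<Sum>z\<in>?P. if z = restrict (h \<omega>) S then (\<Prod>i\<in>S. z i) else 0)"
    proof (rule sum.cong)
      fix z assume z: "z \<in> ?P"
      have "(\<omega> \<in> ?A z) \<longleftrightarrow> z = restrict (h \<omega>) S"
        using z w by (auto simp: PiE_iff extensional_def)
      then show "(\<Prod>i\<in>S. z i) * indicator (?A z) \<omega> = (if z = restrict (h \<omega>) S then (\<Prod>i\<in>S. z i) else 0)"
        by (simp add: indicator_def)
    qed simp
    also have "\<dots> = (\<Prod>i\<in>S. restrict (h \<omega>) S i)"
    proof -
      have "restrict (h \<omega>) S \<in> ?P" using hv[OF w] S by (fastforce simp: PiE_iff)
      then show ?thesis using fin by (simp add: sum.delta' finite_PiE)
    qed
    also have "\<dots> = (\<Prod>i\<in>S. h \<omega> i)" by simp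
    finally show ?thesis by simp
  qed
  have "expectation (\<lambda>\<omega>. \<Prod>i\<in>S. h \<omega> i) = expectation (\<lambda>\<omega>. \<Sum>z\<in>?P. (\<Prod>i\<in>S. z i) * indicator (?A z) \<omega>)"
    using pw by (intro Bochner_Integration.integral_cong) auto
  also have "\<dots> = (\<Sum>z\<in>?P. expectation (\<lambda>\<omega>. (\<Prod>i\<in>S. z i) * indicator (?A z) \<omega>))"
    by (rule Bochner_Integration.integral_sum) (auto intro!: integrable_mult_right integrable_real_indicator set_meas fin S simp: less_top[symmetric] emeasure_finite)
  also have "\<dots> = (\<Sum>z\<in>?P. (\<Prod>i\<in>S. z i) / 2 ^ card S)"
  proof (rule sum.cong)
    fix z assume z: "z \<in> ?P"
    have "prob (?A z) = 1 / 2 ^ card S" using hp[OF S] z by (auto simp: PiE_iff)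
    moreover have "?A z \<inter> space M = ?A z" by auto
    ultimately show "expectation (\<lambda>\<omega>. (\<Prod>i\<in>S. z i) * indicator (?A z) \<omega>) = (\<Prod>i\<in>S. z i) / 2 ^ card S"
      by simp
  qed simp
  also have "\<dots> = (\<Sum>z\<in>?P. (\<Prod>i\<in>S. z i)) / 2 ^ card S"
    by (simp add: sum_divide_distrib)
  also have "(\<Sum>z\<in>?P. (\<Prod>i\<in>S. z i)) = (\<Prod>i\<in>S. \<Sum>t\<in>{-1,1::real}. t)"
    using prod_sum_PiE[OF fin, where f="\<lambda>_ y. y" and B="\<lambda>_. {-1,1::real}"] by simp
  also have "\<dots> = (if S = {} then 1 else 0)"
    using fin by (simp add: prod_zero_iff card_gt_0_iff)
  finally show ?thesis by simp
qed

definition d4 :: "nat \<Rightarrow> nat \<Rightarrow> nat \<Rightarrow> nat \<Rightarrow> real" where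
  "d4 a b c d = (if a = b \<and> c = d \<or> a = c \<and> b = d \<or> a = d \<and> b = c then 1 else 0)"

lemma pow_sign: "x \<in> {-1, 1::real} \<Longrightarrow> x ^ k = (if odd k then x else 1)"
  by auto

lemma habs: "\<omega> \<in> space M \<Longrightarrow> i \<in> {1..n} \<Longrightarrow> \<bar>h \<omega> i\<bar> = 1"
  using hv by fastforce

lemma h4_int: "a \<in> {1..n} \<Longrightarrow> b \<in> {1..n} \<Longrightarrow> c \<in> {1..n} \<Longrightarrow> d \<in> {1..n} \<Longrightarrow>
  integrable M (\<lambda>\<omega>. h \<omega> a * h \<omega> b * h \<omega> c * h \<omega> d)"
proof (rule integrable_const_bound[where B=1])
  assume "a \<in> {1..n}" "b \<in> {1..n}" "c \<in> {1..n}" "d \<in> {1..n}"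
  then show "AE x in M. norm (h x a * h x b * h x c * h x d) \<le> 1"
    by (intro AE_I2) (simp add: abs_mult habs)
  show "(\<lambda>\<omega>. h \<omega> a * h \<omega> b * h \<omega> c * h \<omega> d) \<in> borel_measurable M"
    using \<open>a \<in> {1..n}\<close> \<open>b \<in> {1..n}\<close> \<open>c \<in> {1..n}\<close> \<open>d \<in> {1..n}\<close>
    by (intro borel_measurable_times hm)
qed

lemma E4:
  assumes abcd: "a \<in> {1..n}" "b \<in> {1..n}" "c \<in> {1..n}" "d \<in> {1..n}"
  shows "expectation (\<lambda>\<omega>. h \<omega> a * h \<omega> b * h \<omega> c * h \<omega> d) = d4 a b c d"
proof -
  let ?m = "mset [a,b,c,d]"
  define Od where "Od = {i\<in>{a,b,c,d}. odd (count ?m i)}"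
  have pw: "h \<omega> a * h \<omega> b * h \<omega> c * h \<omega> d = (\<Prod>i\<in>Od. h \<omega> i)" if w: "\<omega> \<in> space M" for \<omega>
  proof -
    have "h \<omega> a * h \<omega> b * h \<omega> c * h \<omega> d = prod_mset (image_mset (h \<omega>) ?m)" by simp
    also have "\<dots> = (\<Prod>i\<in>set_mset ?m. h \<omega> i ^ count ?m i)"
      by (rule image_prod_mset_multiplicity)
    also have "\<dots> = (\<Prod>i\<in>{a,b,c,d}. (if odd (count ?m i) then h \<omega> i else 1))"
      apply (rule prod.cong)
       apply simp
      apply (rule pow_sign)
      using hv[OF w] abcd by auto
    also have "\<dots> = (\<Prod>i\<in>Od. h \<omega> i)"
      unfolding Od_def by (rule prod.inter_filter[symmetric]) simp
    finally show ?thesis .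
  qed
  have "expectation (\<lambda>\<omega>. h \<omega> a * h \<omega> b * h \<omega> c * h \<omega> d) = expectation (\<lambda>\<omega>. \<Prod>i\<in>Od. h \<omega> i)"
    using pw by (intro Bochner_Integration.integral_cong) auto
  also have "\<dots> = (if Od = {} then 1 else 0)"
  proof (rule prodE)
    show "Od \<subseteq> {1..n}" using abcd unfolding Od_def by auto
    have "card Od \<le> card {a,b,c,d}" unfolding Od_def by (intro card_mono) auto
    also have "\<dots> \<le> 4" by (simp add: card_insert_le_m1)
    finally show "card Od \<le> 4" .
  qed
  also have "\<dots> = d4 a b c d"
    unfolding Od_def d4_def using odd_empty[of a b c d] by simp
  finally show ?thesis .
qed

definition e :: "nat \<Rightarrow> nat \<Rightarrow> real" where "e p q = (if p = q then 1 else 0)"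

lemma e_sum1[simp]: "finite A \<Longrightarrow> c \<in> A \<Longrightarrow> (\<Sum>d\<in>A. f d * e c d) = f c"
  by (simp add: e_def if_distrib[where f="\<lambda>y. _ * y"] sum.delta cong: if_cong)

lemma e_sum2[simp]: "finite A \<Longrightarrow> c \<in> A \<Longrightarrow> (\<Sum>d\<in>A. f d * e d c) = f c"
  by (simp add: e_def if_distrib[where f="\<lambda>y. _ * y"] sum.delta' cong: if_cong)

lemma d4_sym: "d4 d c b a = d4 a b c d"
  unfolding d4_def by auto

lemma d4_e: "d4 a b c d = e a b * e c d + e a c * e b d + e b c * e a d - 2 * (e a b * e a c * e a d)"
  unfolding d4_def e_def by auto

definition lf :: "(nat \<Rightarrow> real) \<Rightarrow> 'w \<Rightarrow> real" where
  "lf u \<omega> = (\<Sum>a\<in>{1..n}. u a * h \<omega> a)"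

lemma int4: "(\<And>a b c d. a\<in>I \<Longrightarrow> b\<in>I \<Longrightarrow> c\<in>I \<Longrightarrow> d\<in>I \<Longrightarrow> integrable M (F a b c d)) \<Longrightarrow>
  expectation (\<lambda>\<omega>. \<Sum>a\<in>I. \<Sum>b\<in>I. \<Sum>c\<in>I. \<Sum>d\<in>I. F a b c d \<omega>) =
  (\<Sum>a\<in>I. \<Sum>b\<in>I. \<Sum>c\<in>I. \<Sum>d\<in>I. expectation (F a b c d))"
  by (simp add: integrable_sum)

lemma int2: "(\<And>a b. a\<in>I \<Longrightarrow> b\<in>I \<Longrightarrow> integrable M (F a b)) \<Longrightarrow>
  expectation (\<lambda>\<omega>. \<Sum>a\<in>I. \<Sum>b\<in>I. F a b \<omega>) =
  (\<Sum>a\<in>I. \<Sum>b\<in>I. expectation (F a b))"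
  by (simp add: integrable_sum)

lemma Q:
  "expectation (\<lambda>\<omega>. lf u \<omega> * lf v \<omega> * lf w \<omega> * lf x \<omega>) =
     (\<Sum>a\<in>{1..n}. u a * v a) * (\<Sum>a\<in>{1..n}. w a * x a)
   + (\<Sum>a\<in>{1..n}. u a * w a) * (\<Sum>a\<in>{1..n}. v a * x a)
   + (\<Sum>a\<in>{1..n}. u a * x a) * (\<Sum>a\<in>{1..n}. v a * w a)
   - 2 * (\<Sum>a\<in>{1..n}. u a * v a * w a * x a)"
proof -
  let ?I = "{1..n}"
  let ?K = "\<lambda>a b c d. u d * v c * w b * x a"
  have pw: "lf u \<omega> * lf v \<omega> * lf w \<omega> * lf x \<omega> =
    (\<Sum>a\<in>?I. \<Sum>b\<in>?I. \<Sum>c\<in>?I. \<Sum>d\<in>?I. ?K a b c d * (h \<omega> d * h \<omega> c * h \<omega> b * h \<omega> a))" for \<omega>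
    unfolding lf_def sum_distrib_right sum_distrib_left by (simp add: mult_ac)
  have "expectation (\<lambda>\<omega>. lf u \<omega> * lf v \<omega> * lf w \<omega> * lf x \<omega>) =
    (\<Sum>a\<in>?I. \<Sum>b\<in>?I. \<Sum>c\<in>?I. \<Sum>d\<in>?I. ?K a b c d * expectation (\<lambda>\<omega>. h \<omega> d * h \<omega> c * h \<omega> b * h \<omega> a))"
  proof -
    have i: "\<And>a b c d. a\<in>?I \<Longrightarrow> b\<in>?I \<Longrightarrow> c\<in>?I \<Longrightarrow> d\<in>?I \<Longrightarrow>
       integrable M (\<lambda>\<omega>. ?K a b c d * (h \<omega> d * h \<omega> c * h \<omega> b * h \<omega> a))"
      by (intro integrable_mult_right h4_int)
    show ?thesis unfolding pw
      by (subst int4[where F="\<lambda>a b c d \<omega>. ?K a b c d * (h \<omega> d * h \<omega> c * h \<omega> b * h \<omega> a)", OF i]) auto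
  qed
  also have "\<dots> = (\<Sum>a\<in>?I. \<Sum>b\<in>?I. \<Sum>c\<in>?I. \<Sum>d\<in>?I. ?K a b c d * d4 a b c d)"
    by (simp add: E4 d4_sym)
  also have "\<dots> = (\<Sum>a\<in>?I. \<Sum>b\<in>?I. \<Sum>c\<in>?I. \<Sum>d\<in>?I. ?K a b c d * e a b * e c d)
     + (\<Sum>a\<in>?I. \<Sum>b\<in>?I. \<Sum>c\<in>?I. \<Sum>d\<in>?I. ?K a b c d * e a c * e b d)
     + (\<Sum>a\<in>?I. \<Sum>b\<in>?I. \<Sum>c\<in>?I. \<Sum>d\<in>?I. ?K a b c d * e b c * e a d)
     - 2 * (\<Sum>a\<in>?I. \<Sum>b\<in>?I. \<Sum>c\<in>?I. \<Sum>d\<in>?I. ?K a b c d * e a b * e a c * e a d)"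
    unfolding d4_e by (simp add: algebra_simps sum.distrib sum_subtractf sum_distrib_left)
  also have "(\<Sum>a\<in>?I. \<Sum>b\<in>?I. \<Sum>c\<in>?I. \<Sum>d\<in>?I. ?K a b c d * e a b * e c d)
     = (\<Sum>a\<in>?I. \<Sum>b\<in>?I. \<Sum>c\<in>?I. ?K a b c c * e a b)" by simp
  also have "\<dots> = (\<Sum>a\<in>?I. \<Sum>c\<in>?I. \<Sum>b\<in>?I. ?K a b c c * e a b)"
    by (rule sum.cong[OF refl], rule sum.swap)
  also have "\<dots> = (\<Sum>a\<in>?I. u a * v a) * (\<Sum>a\<in>?I. w a * x a)"
    by (simp; simp add: sum_product mult_ac; rule sum.swap)
  also have "(\<Sum>a\<in>?I. \<Sum>b\<in>?I. \<Sum>c\<in>?I. \<Sum>d\<in>?I. ?K a b c d * e a c * e b d)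
     = (\<Sum>a\<in>?I. u a * w a) * (\<Sum>a\<in>?I. v a * x a)"
    by (simp; simp add: sum_product mult_ac; rule sum.swap)
  also have "(\<Sum>a\<in>?I. \<Sum>b\<in>?I. \<Sum>c\<in>?I. \<Sum>d\<in>?I. ?K a b c d * e b c * e a d)
     = (\<Sum>a\<in>?I. u a * x a) * (\<Sum>a\<in>?I. v a * w a)"
    by (simp; simp add: sum_product mult_ac; rule sum.swap)
  also have "(\<Sum>a\<in>?I. \<Sum>b\<in>?I. \<Sum>c\<in>?I. \<Sum>d\<in>?I. ?K a b c d * e a b * e a c * e a d)
     = (\<Sum>a\<in>?I. u a * v a * w a * x a)"
    by simp
  finally show ?thesis .
qed

lemma h2_int: "a \<in> {1..n} \<Longrightarrow> b \<in> {1..n} \<Longrightarrow> integrable M (\<lambda>\<omega>. h \<omega> a * h \<omega> b)"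
proof (rule integrable_const_bound[where B=1])
  assume "a \<in> {1..n}" "b \<in> {1..n}"
  then show "AE x in M. norm (h x a * h x b) \<le> 1"
    by (intro AE_I2) (simp add: abs_mult habs)
  show "(\<lambda>\<omega>. h \<omega> a * h \<omega> b) \<in> borel_measurable M"
    using \<open>a \<in> {1..n}\<close> \<open>b \<in> {1..n}\<close> by (intro borel_measurable_times hm)
qed

lemma E2h: assumes ab: "a \<in> {1..n}" "b \<in> {1..n}"
  shows "expectation (\<lambda>\<omega>. h \<omega> a * h \<omega> b) = e a b"
proof -
  have "expectation (\<lambda>\<omega>. h \<omega> a * h \<omega> b) = expectation (\<lambda>\<omega>. h \<omega> a * h \<omega> b * h \<omega> b * h \<omega> b)"
    by (rule Bochner_Integration.integral_cong) (auto simp: mult.assoc hsq[OF _ ab(2)])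
  also have "\<dots> = d4 a b b b" using ab by (rule E4) (use ab in auto)
  also have "\<dots> = e a b" unfolding d4_def e_def by auto
  finally show ?thesis .
qed

lemma Q2: "expectation (\<lambda>\<omega>. lf u \<omega> * lf v \<omega>) = (\<Sum>a\<in>{1..n}. u a * v a)"
proof -
  let ?I = "{1..n}"
  have pw: "lf u \<omega> * lf v \<omega> = (\<Sum>a\<in>?I. \<Sum>b\<in>?I. (u b * v a) * (h \<omega> b * h \<omega> a))" for \<omega>
    unfolding lf_def sum_distrib_right sum_distrib_left by (simp add: mult_ac)
  have "expectation (\<lambda>\<omega>. lf u \<omega> * lf v \<omega>) = (\<Sum>a\<in>?I. \<Sum>b\<in>?I. (u b * v a) * expectation (\<lambda>\<omega>. h \<omega> b * h \<omega> a))"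
    unfolding pw by (subst int2[where F="\<lambda>a b \<omega>. (u b * v a) * (h \<omega> b * h \<omega> a)"]) (auto intro!: integrable_mult_right h2_int)
  also have "\<dots> = (\<Sum>a\<in>?I. \<Sum>b\<in>?I. (u b * v a) * e b a)"
    by (simp add: E2h)
  also have "\<dots> = (\<Sum>a\<in>{1..n}. u a * v a)" by simp
  finally show ?thesis .
qed

definition bm :: "('w \<Rightarrow> real) \<Rightarrow> bool" where
  "bm g \<longleftrightarrow> g \<in> borel_measurable M \<and> (\<exists>C. \<forall>\<omega>\<in>space M. \<bar>g \<omega>\<bar> \<le> C)"

lemma bm_int: "bm g \<Longrightarrow> integrable M g"
  unfolding bm_def by (auto intro!: integrable_const_bound AE_I2)

lemma bm_meas: "bm g \<Longrightarrow> g \<in> borel_measurable M"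
  unfolding bm_def by auto

lemma bm_const: "bm (\<lambda>_. k)"
  unfolding bm_def by auto

lemma bm_add: "bm f \<Longrightarrow> bm g \<Longrightarrow> bm (\<lambda>\<omega>. f \<omega> + g \<omega>)"
  unfolding bm_def
proof (elim conjE exE, intro conjI)
  fix C D assume "\<forall>\<omega>\<in>space M. \<bar>f \<omega>\<bar> \<le> C" "\<forall>\<omega>\<in>space M. \<bar>g \<omega>\<bar> \<le> D"
  then show "\<exists>C. \<forall>\<omega>\<in>space M. \<bar>f \<omega> + g \<omega>\<bar> \<le> C"
    by (intro exI[of _ "C + D"]) (auto intro: order_trans[OF abs_triangle_ineq] add_mono)
qed auto

lemma bm_mult: "bm f \<Longrightarrow> bm g \<Longrightarrow> bm (\<lambda>\<omega>. f \<omega> * g \<omega>)"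
  unfolding bm_def
proof (elim conjE exE, intro conjI)
  fix C D assume C: "\<forall>\<omega>\<in>space M. \<bar>f \<omega>\<bar> \<le> C" and D: "\<forall>\<omega>\<in>space M. \<bar>g \<omega>\<bar> \<le> D"
  show "\<exists>C. \<forall>\<omega>\<in>space M. \<bar>f \<omega> * g \<omega>\<bar> \<le> C"
  proof (intro exI[of _ "C * D"] ballI)
    fix \<omega> assume "\<omega> \<in> space M"
    then have "\<bar>f \<omega>\<bar> \<le> C" "\<bar>g \<omega>\<bar> \<le> D" using C D by auto
    then show "\<bar>f \<omega> * g \<omega>\<bar> \<le> C * D" unfolding abs_mult
      by (intro mult_mono) auto
  qed
qed auto

lemma bm_diff: "bm f \<Longrightarrow> bm g \<Longrightarrow> bm (\<lambda>\<omega>. f \<omega> - g \<omega>)"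
  using bm_add[of f "\<lambda>\<omega>. (-1) * g \<omega>"] bm_mult[of "\<lambda>_. -1" g] bm_const by simp

lemma bm_lf: "bm (lf u)"
  unfolding bm_def
proof (intro conjI)
  show "lf u \<in> borel_measurable M"
    unfolding lf_def by (intro borel_measurable_sum borel_measurable_times hm borel_measurable_const) auto
  show "\<exists>C. \<forall>\<omega>\<in>space M. \<bar>lf u \<omega>\<bar> \<le> C"
  proof (intro exI[of _ "\<Sum>a\<in>{1..n}. \<bar>u a\<bar>"] ballI)
    fix \<omega> assume w: "\<omega> \<in> space M"
    have "\<bar>lf u \<omega>\<bar> \<le> (\<Sum>a\<in>{1..n}. \<bar>u a * h \<omega> a\<bar>)" unfolding lf_def by (rule sum_abs)
    also have "\<dots> = (\<Sum>a\<in>{1..n}. \<bar>u a\<bar>)" using w by (intro sum.cong) (auto simp: abs_mult habs)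
    finally show "\<bar>lf u \<omega>\<bar> \<le> (\<Sum>a\<in>{1..n}. \<bar>u a\<bar>)" .
  qed
qed

end

theorem theorem1:
  fixes M :: "'w measure" and h :: "'w \<Rightarrow> nat \<Rightarrow> real"
    and n :: nat and as :: "nat list"
  assumes "prob_space M"
    and "n \<ge> 2"
    and "set as = {1..n}"
    and "four_universal M h n"
  defines "X \<equiv> (\<lambda>\<omega>. (\<Sum>j=1..n. real (freq as j) * h \<omega> j) ^ 2)"
  shows "\<exists>(Z::'w \<Rightarrow> real) (c::real).
           Z \<in> borel_measurable M \<and> integrable M (\<lambda>\<omega>. Z \<omega> ^ 2) \<and>
           prob_space.variance M (\<lambda>\<omega>. X \<omega> + c * (Z \<omega> - prob_space.expectation M Z))
             = prob_space.variance M X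
               - (Fmom n as 1 ^ 2 - Fmom n as 2) ^ 2 / (real n * (real n - 1))"
proof -
  interpret fu M h n using assms(1,4) by (simp add: fu_def fu_axioms_def)
  define f where "f j = real (freq as j)" for j
  define one where "one = (\<lambda>_::nat. 1::real)"
  define Z where "Z = (\<lambda>\<omega>. lf one \<omega> * lf one \<omega>)"
  define F1 where "F1 = (\<Sum>a\<in>{1..n}. f a)"
  define F2 where "F2 = (\<Sum>a\<in>{1..n}. f a * f a)"
  define A where "A = F1 ^ 2 - F2"
  define N where "N = real n * (real n - 1)"
  define c where "c = A * (-1 + sqrt 2 / 2) / N"
  have Npos: "N > 0" unfolding N_def using assms(2) by auto
  have Xe: "X = (\<lambda>\<omega>. lf f \<omega> * lf f \<omega>)"
    unfolding X_def lf_def f_def by (simp add: power2_eq_square)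
  have Fm1: "Fmom n as 1 = F1" unfolding Fmom_def F1_def f_def by simp
  have Fm2: "Fmom n as 2 = F2" unfolding Fmom_def F2_def f_def by (simp add: power2_eq_square)
  have bX: "bm X" unfolding Xe by (intro bm_mult bm_lf)
  have bZ: "bm Z" unfolding Z_def by (intro bm_mult bm_lf)
  have iX: "integrable M X" by (rule bm_int[OF bX])
  have iZ: "integrable M Z" by (rule bm_int[OF bZ])
  have iXZ: "integrable M (\<lambda>\<omega>. X \<omega> * Z \<omega>)" by (rule bm_int[OF bm_mult[OF bX bZ]])
  have iZZ: "integrable M (\<lambda>\<omega>. Z \<omega> * Z \<omega>)" by (rule bm_int[OF bm_mult[OF bZ bZ]])
  have EX: "expectation X = F2" unfolding Xe F2_def by (rule Q2)
  have EZ: "expectation Z = real n" unfolding Z_def one_def by (simp add: Q2)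
  have EXZ: "expectation (\<lambda>\<omega>. X \<omega> * Z \<omega>) = F2 * real n + 2 * F1 ^ 2 - 2 * F2"
  proof -
    have "expectation (\<lambda>\<omega>. X \<omega> * Z \<omega>) = expectation (\<lambda>\<omega>. lf f \<omega> * lf f \<omega> * lf one \<omega> * lf one \<omega>)"
      unfolding Xe Z_def by (simp add: mult.assoc)
    also have "\<dots> = F2 * real n + 2 * F1 ^ 2 - 2 * F2"
      unfolding Q F1_def F2_def one_def by (simp add: power2_eq_square)
    finally show ?thesis .
  qed
  have EZZ: "expectation (\<lambda>\<omega>. Z \<omega> * Z \<omega>) = 3 * real n ^ 2 - 2 * real n"
  proof -
    have "expectation (\<lambda>\<omega>. Z \<omega> * Z \<omega>) = expectation (\<lambda>\<omega>. lf one \<omega> * lf one \<omega> * lf one \<omega> * lf one \<omega>)"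
      unfolding Z_def by (simp add: mult.assoc)
    also have "\<dots> = 3 * real n ^ 2 - 2 * real n"
      unfolding Q one_def by (simp add: power2_eq_square)
    finally show ?thesis .
  qed
  have EV: "expectation (\<lambda>\<omega>. X \<omega> + c * (Z \<omega> - real n)) = F2"
    using iX iZ by (simp add: EX EZ prob_space)
  have "variance (\<lambda>\<omega>. X \<omega> + c * (Z \<omega> - expectation Z))
      = expectation (\<lambda>\<omega>. (X \<omega> - F2)^2 + (2 * c) * (X \<omega> * Z \<omega> - real n * X \<omega> - F2 * Z \<omega> + F2 * real n)
           + c^2 * (Z \<omega> * Z \<omega> - 2 * real n * Z \<omega> + real n ^ 2))"
    unfolding EZ EV by (rule Bochner_Integration.integral_cong) (auto simp: power2_eq_square algebra_simps)
  also have "\<dots> = variance X + (2 * c) * (expectation (\<lambda>\<omega>. X \<omega> * Z \<omega>) - real n * F2 - F2 * real n + F2 * real n)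
           + c^2 * (expectation (\<lambda>\<omega>. Z \<omega> * Z \<omega>) - 2 * real n * real n + real n ^ 2)"
    using iX iZ iXZ iZZ bm_int[OF bm_mult[OF bm_diff[OF bX bm_const] bm_diff[OF bX bm_const]], of F2 F2]
    by (simp add: EX EZ power2_eq_square prob_space)
  also have "\<dots> = variance X + (4 * c * A + 2 * c^2 * N)"
    unfolding EXZ EZZ A_def N_def by (simp add: algebra_simps power2_eq_square)
  also have "4 * c * A + 2 * c^2 * N = - (A ^ 2 / N)"
  proof -
    define t where "t = -1 + sqrt 2 / 2"
    have s2: "sqrt 2 * sqrt 2 = (2::real)" by simp
    have t: "4 * t + 2 * t^2 = -1" unfolding t_def power2_eq_square
      by (simp add: algebra_simps s2)
    have "4 * c * A + 2 * c^2 * N = A^2 / N * (4 * t + 2 * t^2)"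
      unfolding c_def t_def[symmetric] using Npos by (simp add: field_simps power2_eq_square)
    then show ?thesis unfolding t by simp
  qed
  also have "variance X + - (A ^ 2 / N) = variance X - A ^ 2 / N" by simp
  finally show ?thesis
    using bm_meas[OF bZ] bm_int[OF bm_mult[OF bZ bZ]] unfolding Fm1 Fm2 A_def N_def
    by (intro exI[of _ Z] exI[of _ c]) (simp add: power2_eq_square)
qed

end
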